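(* Let $\mathcal D$ be a dyadic grid in $\mathbf R^d$, let $\mathcal S\subseteq\mathcal D$ be a sparse collection, and let $\alpha_1,\ldots,\alpha_m\in[0,1)$ with $\sum_{j=1}^m\alpha_j<1$. Then \[ \sum_{\substack{Q'\in\mathcal S\\ Q'\subseteq Q}}\Big(\prod_{j=1}^m\langle g_j\rangle_{1,Q'}^{\alpha_j}\Big)|Q'|\lesssim\Big(\prod_{j=1}^m\langle g_j\rangle_{1,Q}^{\alpha_j}\Big)|Q| \] for all $g_1,\ldots,g_m\in L^1_{\mathrm{loc}}(\mathbf R^d)$ and all $Q\in\mathcal D$, with implicit constant depending only on $d$, $m$ and $\alpha_1,\dots,\alpha_m$.
   Context: A dyadic grid is $\mathcal D^\alpha=\{2^{-j}([0,1)^d+\alpha+k):j\in\mathbf Z,k\in\mathbf Z^d\}$ for some $\alpha\in\{0,\frac13,\frac23\}^d$. A collection $\mathcal S$ of cubes is sparse if each $Q\in\mathcal S$ has $E_Q\subseteq Q$ with $|E_Q|\ge\frac12|Q|$ and $\{E_Q\}_{Q\in\mathcal S}$ pairwise disjoint. $\langle g\rangle_{1,Q}:=\frac1{|Q|}\int_Q|g|$. *)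

theory Defs
  imports "HOL-Analysis.Analysis"
begin

definition dyadic_cube :: "(real^'n) \<Rightarrow> int \<Rightarrow> (int^'n) \<Rightarrow> (real^'n) set" where
  "dyadic_cube t j k = {x. \<forall>i. 2 powr (- real_of_int j) * (t$i + real_of_int (k$i)) \<le> x$i
                            \<and> x$i < 2 powr (- real_of_int j) * (t$i + real_of_int (k$i) + 1)}"

definition dyadic_grid :: "(real^'n) \<Rightarrow> (real^'n) set set" where
  "dyadic_grid t = {dyadic_cube t j k | j k. True}"

definition grid_shift :: "(real^'n) \<Rightarrow> bool" where
  "grid_shift t \<longleftrightarrow> (\<forall>i. t$i \<in> {0, 1/3, 2/3})"

definition sparse :: "(real^'n) set set \<Rightarrow> bool" where
  "sparse S \<longleftrightarrow> (\<exists>E. (\<forall>Q\<in>S. E Q \<subseteq> Q \<and> E Q \<in> sets lebesgue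
                          \<and> measure lebesgue (E Q) \<ge> 1/2 * measure lebesgue Q)
                   \<and> (\<forall>Q\<in>S. \<forall>Q'\<in>S. Q \<noteq> Q' \<longrightarrow> E Q \<inter> E Q' = {}))"

definition avg1 :: "((real^'n) \<Rightarrow> real) \<Rightarrow> (real^'n) set \<Rightarrow> real" where
  "avg1 g Q = (\<integral>x\<in>Q. \<bar>g x\<bar> \<partial>lebesgue) / measure lebesgue Q"

definition locally_integrable :: "((real^'n) \<Rightarrow> real) \<Rightarrow> bool" where
  "locally_integrable g \<longleftrightarrow> (\<forall>K. compact K \<longrightarrow> set_integrable lebesgue K g)"

text \<open>Power with the convention x^0 = 1 (also for x = 0).\<close>
definition pw :: "real \<Rightarrow> real \<Rightarrow> real" where
  "pw x a = (if a = 0 then 1 else x powr a)"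

end

theory Submission
  imports Defs
begin
definition hbox :: "real^'n \<Rightarrow> real^'n \<Rightarrow> (real^'n) set" where
  "hbox a b = {x. \<forall>i. a$i \<le> x$i \<and> x$i < b$i}"
lemma hbox_borel: fixes a b :: "real^'n" shows "hbox a b \<in> sets borel"
proof -
  have "hbox a b = (\<Inter>i. {x. a$i \<le> x$i} \<inter> {x. x$i < b$i})" unfolding hbox_def by auto
  moreover have "closed {x::real^'n. a$i \<le> x$i}" for i
    by (intro closed_Collect_le continuous_intros)
  moreover have "open {x::real^'n. x$i < b$i}" for i
    by (intro open_Collect_less continuous_intros)
  ultimately show ?thesis by (auto intro!: sets.countable_INT)
qed
lemma hbox_sub: "box a b \<subseteq> hbox a b" "hbox a b \<subseteq> cbox a b"
  unfolding hbox_def by (auto simp: mem_box_cart less_imp_le)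
lemma measure_lborel_cbox_cart: fixes a b :: "real^'n" assumes "\<forall>i. a$i \<le> b$i"
  shows "measure lborel (cbox a b) = (\<Prod>i\<in>UNIV. b$i - a$i)"
    "measure lborel (box a b) = (\<Prod>i\<in>UNIV. b$i - a$i)"
proof -
  have ne: "cbox a b \<noteq> {}" proof -
    have "a \<in> cbox a b" using assms by (simp add: mem_box_cart)
    then show ?thesis by blast
  qed
  show "measure lborel (cbox a b) = (\<Prod>i\<in>UNIV. b$i - a$i)"
    using content_cbox_cart[OF ne] by simp
  show "measure lborel (box a b) = (\<Prod>i\<in>UNIV. b$i - a$i)"
    using content_cbox_cart[OF ne] by (simp add: measure_lborel_box_eq measure_lborel_cbox_eq)
qed
lemma measure_hbox: fixes a b :: "real^'n" assumes "\<forall>i. a$i \<le> b$i"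
  shows "measure lebesgue (hbox a b) = (\<Prod>i\<in>UNIV. b$i - a$i)"
    "hbox a b \<in> sets lebesgue" "emeasure lebesgue (hbox a b) < \<infinity>"
proof -
  have hs: "hbox a b \<in> sets lborel" using hbox_borel by simp
  have "emeasure lborel (hbox a b) \<le> emeasure lborel (cbox a b)" by (rule emeasure_mono[OF hbox_sub(2)]) simp
  then have f: "emeasure lborel (hbox a b) < \<infinity>"
    using emeasure_lborel_cbox_finite[of a b]
    by (simp add: less_le_trans)
  show "hbox a b \<in> sets lebesgue" using hs by simp
  show "emeasure lebesgue (hbox a b) < \<infinity>" using f hs by (simp add: emeasure_completion)
  have "measure lborel (box a b) \<le> measure lborel (hbox a b)"
    by (intro measure_mono_fmeasurable hbox_sub) (use f hs hbox_borel emeasure_lborel_cbox_finite in \<open>auto simp: fmeasurable_def top_unique\<close>)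
  moreover have "measure lborel (hbox a b) \<le> measure lborel (cbox a b)"
    by (intro measure_mono_fmeasurable hbox_sub) (use f hs hbox_borel emeasure_lborel_cbox_finite in \<open>auto simp: fmeasurable_def top_unique\<close>)
  ultimately show "measure lebesgue (hbox a b) = (\<Prod>i\<in>UNIV. b$i - a$i)"
    using measure_lborel_cbox_cart[OF assms] hs by simp
qed
definition cube :: "real^'n \<Rightarrow> real \<Rightarrow> (real^'n) set" where
  "cube c h = hbox c (\<chi> i. c$i + h)"
definition dil :: "real^'n \<Rightarrow> real \<Rightarrow> (real^'n) set" where
  "dil c h = hbox (\<chi> i. c$i - h) (\<chi> i. c$i + 2*h)"
definition iscube :: "(real^'n) set \<Rightarrow> bool" where
  "iscube Q \<longleftrightarrow> (\<exists>c h. h > 0 \<and> Q = cube c h)"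

lemma cube_props: fixes c :: "real^'n" assumes "h > 0"
  shows "cube c h \<in> sets lebesgue" "emeasure lebesgue (cube c h) < \<infinity>"
    "measure lebesgue (cube c h) = h ^ CARD('n)" "cube c h \<in> fmeasurable lebesgue"
    "cube c h \<subseteq> cbox c (\<chi> i. c$i + h)" "c \<in> cube c h"
proof -
  have le: "\<forall>i. c$i \<le> (\<chi> i. c$i + h)$i" using assms by simp
  show "cube c h \<in> sets lebesgue" "emeasure lebesgue (cube c h) < \<infinity>"
    unfolding cube_def using measure_hbox[OF le] by auto
  then show "cube c h \<in> fmeasurable lebesgue" by (simp add: fmeasurable_def)
  show "measure lebesgue (cube c h) = h ^ CARD('n)"
    unfolding cube_def using measure_hbox(1)[OF le] by simp
  show "cube c h \<subseteq> cbox c (\<chi> i. c$i + h)" unfolding cube_def using hbox_sub(2) .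
  show "c \<in> cube c h" using assms by (simp add: cube_def hbox_def)
qed

lemma dil_props: fixes c :: "real^'n" assumes "h > 0"
  shows "dil c h \<in> fmeasurable lebesgue" "measure lebesgue (dil c h) = 3 ^ CARD('n) * h ^ CARD('n)"
proof -
  have le: "\<forall>i. (\<chi> i. c$i - h)$i \<le> (\<chi> i. c$i + 2*h)$i" using assms by simp
  show "dil c h \<in> fmeasurable lebesgue"
    unfolding dil_def using measure_hbox[OF le] by (auto simp: fmeasurable_def)
  have "measure lebesgue (dil c h) = (\<Prod>i\<in>(UNIV::'n set). 3 * h)"
    unfolding dil_def using measure_hbox(1)[OF le] by simp
  then show "measure lebesgue (dil c h) = 3 ^ CARD('n) * h ^ CARD('n)"
    by (simp add: power_mult_distrib)
qed

lemma cube_in_dil: fixes c1 c2 :: "real^'n"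
  assumes "cube c1 h1 \<inter> cube c2 h2 \<noteq> {}" "h2 \<le> h1"
  shows "cube c2 h2 \<subseteq> dil c1 h1"
proof -
  obtain y where y: "y \<in> cube c1 h1" "y \<in> cube c2 h2" using assms(1) by blast
  show ?thesis
  proof
    fix x assume x: "x \<in> cube c2 h2"
    show "x \<in> dil c1 h1" unfolding dil_def hbox_def
    proof (simp, intro allI)
      fix i
      have "c1$i \<le> y$i" "y$i < c1$i + h1" "c2$i \<le> y$i" "y$i < c2$i + h2"
           "c2$i \<le> x$i" "x$i < c2$i + h2"
        using y x by (auto simp: cube_def hbox_def)
      then show "c1 $ i - h1 \<le> x $ i \<and> x $ i < c1 $ i + 2 * h1" using assms(2) by linarith
    qed
  qed
qed

lemma dyadic_iscube: "Q \<in> dyadic_grid t \<Longrightarrow> iscube Q"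
proof -
  assume "Q \<in> dyadic_grid t"
  then obtain j k where Q: "Q = dyadic_cube t j k" by (auto simp: dyadic_grid_def)
  define h :: real where "h = 2 powr (- real_of_int j)"
  define c where "c = (\<chi> i. h * (t$i + real_of_int (k$i)))"
  have "Q = cube c h" unfolding Q dyadic_cube_def cube_def hbox_def c_def h_def
    by (simp add: algebra_simps)
  moreover have "h > 0" by (simp add: h_def)
  ultimately show ?thesis by (auto simp: iscube_def)
qed

lemma iscube_props: assumes "iscube (Q :: (real^'n) set)"
  shows "Q \<in> sets lebesgue" "Q \<in> fmeasurable lebesgue" "emeasure lebesgue Q < \<infinity>"
    "measure lebesgue Q > 0" "bounded Q" "Q \<noteq> {}"
proof -
  obtain c h where h: "h > 0" and Q: "Q = cube c h" using assms unfolding iscube_def by blast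
  show "Q \<in> sets lebesgue" "Q \<in> fmeasurable lebesgue" "emeasure lebesgue Q < \<infinity>"
    "measure lebesgue Q > 0" "Q \<noteq> {}"
    using cube_props[OF h, of c] h unfolding Q by auto
  show "bounded Q" unfolding Q using cube_props(5)[OF h, of c] bounded_cbox bounded_subset by blast
qed

lemma union_cubes_fmeas: "finite T \<Longrightarrow> \<forall>Q\<in>T. iscube (Q::(real^'n) set) \<Longrightarrow> \<Union>T \<in> fmeasurable lebesgue"
  using iscube_props(2) by (intro fmeasurable.finite_Union) auto

lemma vitali_fin:
  fixes T :: "(real^'n) set set"
  assumes "finite T" "\<forall>Q\<in>T. iscube Q"
  shows "\<exists>M\<subseteq>T. (\<forall>P\<in>M. \<forall>P'\<in>M. P \<noteq> P' \<longrightarrow> P \<inter> P' = {})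
           \<and> measure lebesgue (\<Union>T) \<le> 3^CARD('n) * (\<Sum>P\<in>M. measure lebesgue P)"
  using assms
proof (induction "card T" arbitrary: T rule: less_induct)
  case less
  show ?case
  proof (cases "T = {}")
    case True then show ?thesis by auto
  next
    case False
    define mu where "mu = (\<lambda>Q::(real^'n) set. measure lebesgue Q)"
    have "Max (mu ` T) \<in> mu ` T" using False less.prems by (intro Max_in) auto
    then obtain P where P: "P \<in> T" "mu P = Max (mu ` T)" by auto
    have Pmax: "mu Q \<le> mu P" if "Q \<in> T" for Q using P that less.prems by simp
    obtain c h where h: "h > 0" and Pc: "P = cube c h" using less.prems P unfolding iscube_def by blast
    define T' where "T' = {Q\<in>T. Q \<inter> P = {}}"
    have "P \<notin> T'" using cube_props(6)[OF h, of c] Pc unfolding T'_def by auto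
    then have "T' \<subset> T" using P unfolding T'_def by auto
    then have "card T' < card T" using less.prems by (simp add: psubset_card_mono)
    moreover have "finite T'" "\<forall>Q\<in>T'. iscube Q" using less.prems unfolding T'_def by auto
    ultimately have "\<exists>M\<subseteq>T'. (\<forall>P\<in>M. \<forall>P'\<in>M. P \<noteq> P' \<longrightarrow> P \<inter> P' = {})
           \<and> measure lebesgue (\<Union>T') \<le> 3^CARD('n) * (\<Sum>P\<in>M. measure lebesgue P)"
      by (rule less.hyps)
    then obtain M' where M': "M' \<subseteq> T'" "\<forall>P\<in>M'. \<forall>P'\<in>M'. P \<noteq> P' \<longrightarrow> P \<inter> P' = {}"
       "measure lebesgue (\<Union>T') \<le> 3^CARD('n) * (\<Sum>P\<in>M'. measure lebesgue P)"
      by blast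
    have sub: "\<Union>T \<subseteq> dil c h \<union> \<Union>T'"
    proof
      fix x assume "x \<in> \<Union>T"
      then obtain Q where Q: "Q \<in> T" "x \<in> Q" by auto
      show "x \<in> dil c h \<union> \<Union>T'"
      proof (cases "Q \<inter> P = {}")
        case True then show ?thesis using Q unfolding T'_def by auto
      next
        case False
        obtain c' h' where h': "h' > 0" and Qc: "Q = cube c' h'" using less.prems Q unfolding iscube_def by blast
        have "h' ^ CARD('n) \<le> h ^ CARD('n)" using Pmax[OF Q(1)] cube_props(3)[OF h, of c] cube_props(3)[OF h', of c']
          unfolding mu_def Pc Qc by simp
        then have "h' \<le> h" using h h' power_mono_iff[of h' h "CARD('n)"] by simp
        then have "Q \<subseteq> dil c h" using cube_in_dil[of c h c' h'] False unfolding Pc Qc by blast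
        then show ?thesis using Q by auto
      qed
    qed
    have fT': "\<Union>T' \<in> fmeasurable lebesgue" using union_cubes_fmeas \<open>finite T'\<close> \<open>\<forall>Q\<in>T'. iscube Q\<close> by blast
    have "measure lebesgue (\<Union>T) \<le> measure lebesgue (dil c h \<union> \<Union>T')"
      using sub union_cubes_fmeas[OF less.prems] dil_props(1)[OF h, of c] fT'
      by (intro measure_mono_fmeasurable) auto
    also have "\<dots> \<le> measure lebesgue (dil c h) + measure lebesgue (\<Union>T')"
      using dil_props(1)[OF h, of c] fT' by (intro measure_Un_le) auto
    also have "\<dots> \<le> 3^CARD('n) * measure lebesgue P + 3^CARD('n) * (\<Sum>P\<in>M'. measure lebesgue P)"
      using dil_props(2)[OF h, of c] cube_props(3)[OF h, of c] M'(3) Pc by simp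
    also have "\<dots> = 3^CARD('n) * (\<Sum>P\<in>insert P M'. measure lebesgue P)"
    proof -
      have "finite M'" using M'(1) \<open>finite T'\<close> finite_subset by blast
      moreover have "P \<notin> M'" using M'(1) \<open>P \<notin> T'\<close> by blast
      ultimately show ?thesis by (simp add: algebra_simps)
    qed
    finally have meas: "measure lebesgue (\<Union>T) \<le> 3^CARD('n) * (\<Sum>P\<in>insert P M'. measure lebesgue P)" .
    have disj: "\<forall>A\<in>insert P M'. \<forall>B\<in>insert P M'. A \<noteq> B \<longrightarrow> A \<inter> B = {}"
      using M'(1,2) unfolding T'_def by blast
    show ?thesis using meas disj M'(1) P(1) unfolding T'_def by (intro exI[of _ "insert P M'"]) auto
  qed
qed

lemma sparse_bound:
  fixes S T :: "(real^'n) set set"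
  assumes E: "\<forall>Q\<in>S. E Q \<subseteq> Q \<and> E Q \<in> sets lebesgue \<and> measure lebesgue (E Q) \<ge> 1/2 * measure lebesgue Q"
    and Ed: "\<forall>Q\<in>S. \<forall>Q'\<in>S. Q \<noteq> Q' \<longrightarrow> E Q \<inter> E Q' = {}"
    and T: "finite T" "T \<subseteq> S" "\<forall>Q\<in>T. iscube Q"
    and B: "B \<in> fmeasurable lebesgue" "\<Union>T \<subseteq> B"
  shows "(\<Sum>Q\<in>T. measure lebesgue Q) \<le> 2 * measure lebesgue B"
proof -
  have "(\<Sum>Q\<in>T. measure lebesgue Q) \<le> (\<Sum>Q\<in>T. 2 * measure lebesgue (E Q))"
    using E T(2) by (intro sum_mono) (auto simp: mult.commute)
  also have "\<dots> = 2 * measure lebesgue (\<Union>Q\<in>T. E Q)"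
  proof -
    have fin: "emeasure lebesgue (E Q) \<noteq> \<infinity>" if "Q \<in> T" for Q
    proof -
      have "emeasure lebesgue (E Q) \<le> emeasure lebesgue Q"
        using E T that iscube_props(1)[of Q] by (intro emeasure_mono) auto
      then show ?thesis using iscube_props(3)[of Q] T that by (auto simp: top_unique)
    qed
    have "measure lebesgue (\<Union>Q\<in>T. E Q) = (\<Sum>Q\<in>T. measure lebesgue (E Q))"
    proof (rule measure_finite_Union)
      show "disjoint_family_on E T" unfolding disjoint_family_on_def using Ed T(2) by blast
    qed (use T E fin in auto)
    then show ?thesis by (simp add: sum_distrib_left)
  qed
  also have "\<dots> \<le> 2 * measure lebesgue B"
  proof -
    have "(\<Union>Q\<in>T. E Q) \<in> sets lebesgue" using E T by (intro sets.finite_UN) auto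
    moreover have "(\<Union>Q\<in>T. E Q) \<subseteq> B" using E T B by blast
    ultimately have "measure lebesgue (\<Union>Q\<in>T. E Q) \<le> measure lebesgue B"
      using B by (intro measure_mono_fmeasurable) auto
    then show ?thesis by simp
  qed
  finally show ?thesis .
qed

lemma indicator_sum_le:
  assumes "finite M" "\<forall>P\<in>M. \<forall>P'\<in>M. P \<noteq> P' \<longrightarrow> P \<inter> P' = {}" "\<forall>P\<in>M. P \<subseteq> Q"
  shows "(\<Sum>P\<in>M. indicator P x) \<le> (indicator Q x :: real)"
proof (cases "\<exists>P0\<in>M. x \<in> P0")
  case True
  then obtain P0 where P0: "P0 \<in> M" "x \<in> P0" by blast
  have "(\<Sum>P\<in>M. indicator P x :: real) = indicator P0 x + (\<Sum>P\<in>M-{P0}. indicator P x)"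
    using assms(1) P0(1) by (simp add: sum.remove)
  also have "(\<Sum>P\<in>M-{P0}. indicator P x :: real) = 0"
    using assms(2) P0 by (intro sum.neutral) (auto simp: indicator_def)
  finally show ?thesis using P0 assms(3) by (auto simp: indicator_def)
next
  case False
  then have "(\<Sum>P\<in>M. indicator P x :: real) = 0" by (intro sum.neutral) (auto simp: indicator_def)
  then show ?thesis by (simp add: indicator_def)
qed

lemma integral_disjoint_sum:
  fixes f :: "real^'n \<Rightarrow> real"
  assumes "finite M" "\<forall>P\<in>M. \<forall>P'\<in>M. P \<noteq> P' \<longrightarrow> P \<inter> P' = {}"
    "\<forall>P\<in>M. P \<subseteq> Q \<and> P \<in> sets lebesgue" "set_integrable lebesgue Q f" "\<forall>x. f x \<ge> 0"
  shows "(\<Sum>P\<in>M. (\<integral>x\<in>P. f x \<partial>lebesgue)) \<le> (\<integral>x\<in>Q. f x \<partial>lebesgue)"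
proof -
  have int: "integrable lebesgue (\<lambda>x. indicator P x * f x)" if "P \<in> M" for P
    using set_integrable_subset[OF assms(4), of P] assms(3) that unfolding set_integrable_def by auto
  have "(\<Sum>P\<in>M. (\<integral>x\<in>P. f x \<partial>lebesgue)) = (\<integral>x. (\<Sum>P\<in>M. indicator P x * f x) \<partial>lebesgue)"
    unfolding set_lebesgue_integral_def using int by (simp add: integral_sum)
  also have "\<dots> \<le> (\<integral>x. indicator Q x * f x \<partial>lebesgue)"
  proof (rule integral_mono)
    show "integrable lebesgue (\<lambda>x. \<Sum>P\<in>M. indicator P x * f x)" using int by auto
    show "integrable lebesgue (\<lambda>x. indicator Q x * f x)" using assms(4) unfolding set_integrable_def by simp
    fix x
    have "(\<Sum>P\<in>M. indicator P x) \<le> (indicator Q x :: real)"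
      using assms by (intro indicator_sum_le) auto
    then have "(\<Sum>P\<in>M. indicator P x) * f x \<le> indicator Q x * f x"
      using assms(5) by (intro mult_right_mono) auto
    then show "(\<Sum>P\<in>M. indicator P x * f x) \<le> indicator Q x * f x" by (simp add: sum_distrib_right)
  qed
  also have "\<dots> = (\<integral>x\<in>Q. f x \<partial>lebesgue)" unfolding set_lebesgue_integral_def by simp
  finally show ?thesis .
qed

lemma level_bound:
  fixes S T :: "(real^'n) set set" and g :: "real^'n \<Rightarrow> real"
  assumes E: "\<forall>Q\<in>S. E Q \<subseteq> Q \<and> E Q \<in> sets lebesgue \<and> measure lebesgue (E Q) \<ge> 1/2 * measure lebesgue Q"
    and Ed: "\<forall>Q\<in>S. \<forall>Q'\<in>S. Q \<noteq> Q' \<longrightarrow> E Q \<inter> E Q' = {}"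
    and T: "finite T" "T \<subseteq> S" "\<forall>Q'\<in>T. iscube Q' \<and> Q' \<subseteq> Q"
    and gi: "set_integrable lebesgue Q g" and mu: "mu > 0"
  shows "(\<Sum>Q'\<in>{Q'\<in>T. avg1 g Q' > mu}. measure lebesgue Q') \<le> 2 * 3^CARD('n) / mu * (\<integral>x\<in>Q. \<bar>g x\<bar> \<partial>lebesgue)"
proof -
  define T' where "T' = {Q'\<in>T. avg1 g Q' > mu}"
  have T': "finite T'" "T' \<subseteq> S" "\<forall>Q\<in>T'. iscube Q" using T unfolding T'_def by auto
  obtain M where M: "M \<subseteq> T'" "\<forall>P\<in>M. \<forall>P'\<in>M. P \<noteq> P' \<longrightarrow> P \<inter> P' = {}"
    "measure lebesgue (\<Union>T') \<le> 3^CARD('n) * (\<Sum>P\<in>M. measure lebesgue P)"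
    using vitali_fin[OF T'(1,3)] by blast
  have fM: "finite M" using M(1) T'(1) finite_subset by blast
  have "(\<Sum>Q'\<in>T'. measure lebesgue Q') \<le> 2 * measure lebesgue (\<Union>T')"
    using union_cubes_fmeas[OF T'(1,3)] by (intro sparse_bound[OF E Ed T']) auto
  also have "\<dots> \<le> 2 * (3^CARD('n) * (\<Sum>P\<in>M. measure lebesgue P))" using M(3) by simp
  also have "(\<Sum>P\<in>M. measure lebesgue P) \<le> (\<Sum>P\<in>M. (\<integral>x\<in>P. \<bar>g x\<bar> \<partial>lebesgue) / mu)"
  proof (rule sum_mono)
    fix P assume "P \<in> M"
    then have P: "P \<in> T'" using M(1) by blast
    then have pos: "measure lebesgue P > 0" using T' iscube_props(4) by blast
    have "mu < (\<integral>x\<in>P. \<bar>g x\<bar> \<partial>lebesgue) / measure lebesgue P"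
      using P unfolding T'_def avg1_def by simp
    then have "mu * measure lebesgue P < (\<integral>x\<in>P. \<bar>g x\<bar> \<partial>lebesgue)"
      using pos by (simp add: field_simps)
    then show "measure lebesgue P \<le> (\<integral>x\<in>P. \<bar>g x\<bar> \<partial>lebesgue) / mu"
      using mu by (simp add: field_simps)
  qed
  also have "(\<Sum>P\<in>M. (\<integral>x\<in>P. \<bar>g x\<bar> \<partial>lebesgue) / mu) = (\<Sum>P\<in>M. (\<integral>x\<in>P. \<bar>g x\<bar> \<partial>lebesgue)) / mu"
    by (simp add: sum_divide_distrib)
  also have "(\<Sum>P\<in>M. (\<integral>x\<in>P. \<bar>g x\<bar> \<partial>lebesgue)) \<le> (\<integral>x\<in>Q. \<bar>g x\<bar> \<partial>lebesgue)"
  proof (rule integral_disjoint_sum[OF fM M(2)])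
    show "\<forall>P\<in>M. P \<subseteq> Q \<and> P \<in> sets lebesgue" using M(1) T T'_def iscube_props(1) by blast
    show "set_integrable lebesgue Q (\<lambda>x. \<bar>g x\<bar>)" using gi by (rule set_integrable_abs)
  qed auto
  finally show ?thesis using mu unfolding T'_def by (simp add: divide_right_mono field_simps)
qed

lemma avg1_nonneg: "avg1 g Q \<ge> 0"
  unfolding avg1_def set_lebesgue_integral_def
  by (intro divide_nonneg_nonneg Bochner_Integration.integral_nonneg) (auto simp: indicator_def)

lemma pw_level:
  fixes x s :: real
  assumes "0 \<le> s" "0 \<le> x" "x \<le> 2^N"
  shows "x powr s \<le> 1 + (\<Sum>i\<in>{1..N}. if x > 2^(i-1) then 2 powr (real i * s) else 0)"
  using assms(3)
proof (induction N)
  case 0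
  then have "x powr s \<le> 1 powr s" using assms by (intro powr_mono2) auto
  then show ?case by simp
next
  case (Suc N)
  have nn: "0 \<le> (\<Sum>i\<in>{1..N}. if x > 2^(i-1) then 2 powr (real i * s) else (0::real))"
    by (intro sum_nonneg) auto
  show ?case
  proof (cases "x \<le> 2^N")
    case True
    then have "x powr s \<le> 1 + (\<Sum>i\<in>{1..N}. if x > 2^(i-1) then 2 powr (real i * s) else 0)"
      using Suc.IH by simp
    moreover have "(\<Sum>i\<in>{1..Suc N}. if x > 2^(i-1) then 2 powr (real i * s) else (0::real))
       = (\<Sum>i\<in>{1..N}. if x > 2^(i-1) then 2 powr (real i * s) else 0)
         + (if x > 2^N then 2 powr (real (Suc N) * s) else 0)"
      by simp
    moreover have "0 \<le> (if x > 2^N then 2 powr (real (Suc N) * s) else (0::real))" by simp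
    ultimately show ?thesis by linarith
  next
    case False
    have "x powr s \<le> (2^Suc N) powr s" using Suc.prems assms by (intro powr_mono2) auto
    also have "\<dots> = 2 powr (real (Suc N) * s)"
    proof -
      have "(2::real)^Suc N = 2 powr (real (Suc N))" using powr_realpow[of 2 "Suc N"] by simp
      then show ?thesis by (simp add: powr_powr)
    qed
    finally have "x powr s \<le> 2 powr (real (Suc N) * s)" .
    moreover have "(\<Sum>i\<in>{1..Suc N}. if x > 2^(i-1) then 2 powr (real i * s) else (0::real))
       = (\<Sum>i\<in>{1..N}. if x > 2^(i-1) then 2 powr (real i * s) else 0)
         + 2 powr (real (Suc N) * s)"
      using False by simp
    ultimately show ?thesis using nn by linarith
  qed
qed

lemma geom_bound:
  fixes r :: real assumes "0 \<le> r" "r < 1"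
  shows "(\<Sum>i\<in>{1..N}. r^i) \<le> 1 / (1 - r)"
proof -
  have "(\<Sum>i\<in>{1..N}. r^i) \<le> (\<Sum>i. r^i)"
    using assms by (intro sum_le_suminf summable_geometric) auto
  then show ?thesis using suminf_geometric[of r] assms by simp
qed

lemma r_bounds: fixes s :: real assumes "s < 1" shows "0 \<le> 2 powr (s-1)" "2 powr (s-1) < 1"
proof -
  show "0 \<le> 2 powr (s-1)" by simp
  have "2 powr (s-1) < 2 powr 0" using assms by (intro powr_less_mono) auto
  then show "2 powr (s-1) < 1" by simp
qed

lemma c_over_pow: fixes s :: real shows "2 powr (real i * s) / 2^i = (2 powr (s-1))^i"
proof -
  have "(2 powr (s-1))^i = (2 powr (s-1)) powr real i" by (simp add: powr_realpow)
  also have "\<dots> = 2 powr (real i * s - real i)" by (simp add: powr_powr algebra_simps)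
  also have "\<dots> = 2 powr (real i * s) / 2 powr real i" by (rule powr_diff)
  also have "\<dots> = 2 powr (real i * s) / 2^i" by (simp add: powr_realpow)
  finally show ?thesis by simp
qed

lemma single_bound:
  fixes S T :: "(real^'n) set set" and g :: "real^'n \<Rightarrow> real"
  assumes E: "\<forall>Q\<in>S. E Q \<subseteq> Q \<and> E Q \<in> sets lebesgue \<and> measure lebesgue (E Q) \<ge> 1/2 * measure lebesgue Q"
    and Ed: "\<forall>Q\<in>S. \<forall>Q'\<in>S. Q \<noteq> Q' \<longrightarrow> E Q \<inter> E Q' = {}"
    and T: "finite T" "T \<subseteq> S" "\<forall>Q'\<in>T. iscube Q' \<and> Q' \<subseteq> Q"
    and Qc: "iscube Q" and gi: "set_integrable lebesgue Q g" and A: "avg1 g Q > 0"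
    and s: "0 \<le> s" "s < 1"
  shows "(\<Sum>Q'\<in>T. (avg1 g Q' / avg1 g Q) powr s * measure lebesgue Q')
          \<le> (2 + 4 * 3^CARD('n) / (1 - 2 powr (s-1))) * measure lebesgue Q"
proof -
  define a where "a = avg1 g Q"
  define mQ where "mQ = measure lebesgue Q"
  define m where "m = (\<lambda>Q'::(real^'n) set. measure lebesgue Q')"
  define x where "x = (\<lambda>Q'. avg1 g Q' / a)"
  define r :: real where "r = 2 powr (s-1)"
  define c where "c = (\<lambda>i::nat. 2 powr (real i * s))"
  define D :: real where "D = 3^CARD('n)"
  have a: "a > 0" using A a_def by simp
  have mQ: "mQ > 0" using iscube_props(4)[OF Qc] mQ_def by simp
  have I: "(\<integral>x\<in>Q. \<bar>g x\<bar> \<partial>lebesgue) = a * mQ" using mQ unfolding a_def mQ_def avg1_def by simp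
  have x0: "x Q' \<ge> 0" for Q' unfolding x_def using a avg1_nonneg[of g Q'] by simp
  have m0: "m Q' \<ge> 0" for Q' unfolding m_def by simp
  define N where "N = nat \<lceil>\<Sum>Q'\<in>T. x Q'\<rceil>"
  have xN: "x Q' \<le> 2^N" if "Q' \<in> T" for Q'
  proof -
    have "x Q' \<le> (\<Sum>Q'\<in>T. x Q')" using T(1) that x0 by (intro member_le_sum) auto
    also have "\<dots> \<le> real N" unfolding N_def by linarith
    also have "\<dots> \<le> 2^N" using less_exp[of N] by (simp add: of_nat_less_two_power less_imp_le)
    finally show ?thesis .
  qed
  define f where "f = (\<lambda>i Q'. if x Q' > 2^(i-1) then c i else (0::real))"
  have "(\<Sum>Q'\<in>T. (x Q') powr s * m Q') \<le> (\<Sum>Q'\<in>T. (1 + (\<Sum>i\<in>{1..N}. f i Q')) * m Q')"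
  proof (rule sum_mono)
    fix Q' assume "Q' \<in> T"
    then have "x Q' powr s \<le> 1 + (\<Sum>i\<in>{1..N}. f i Q')"
      unfolding f_def c_def using pw_level[OF s(1) x0 xN] by simp
    then show "x Q' powr s * m Q' \<le> (1 + (\<Sum>i\<in>{1..N}. f i Q')) * m Q'"
      using m0 by (intro mult_right_mono) auto
  qed
  also have "\<dots> = (\<Sum>Q'\<in>T. m Q') + (\<Sum>i\<in>{1..N}. c i * (\<Sum>Q'\<in>{Q'\<in>T. x Q' > 2^(i-1)}. m Q'))"
  proof -
    have "(\<Sum>Q'\<in>T. (1 + (\<Sum>i\<in>{1..N}. f i Q')) * m Q') = (\<Sum>Q'\<in>T. m Q') + (\<Sum>Q'\<in>T. \<Sum>i\<in>{1..N}. f i Q' * m Q')"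
      by (simp add: distrib_right sum.distrib sum_distrib_right)
    also have "(\<Sum>Q'\<in>T. \<Sum>i\<in>{1..N}. f i Q' * m Q') = (\<Sum>i\<in>{1..N}. \<Sum>Q'\<in>T. f i Q' * m Q')"
      by (rule sum.swap)
    also have "\<dots> = (\<Sum>i\<in>{1..N}. c i * (\<Sum>Q'\<in>{Q'\<in>T. x Q' > 2^(i-1)}. m Q'))"
    proof (rule sum.cong[OF refl])
      fix i
      have "(\<Sum>Q'\<in>{Q'\<in>T. x Q' > 2^(i-1)}. m Q') = (\<Sum>Q'\<in>T. if x Q' > 2^(i-1) then m Q' else 0)"
        using T(1) by (rule sum.inter_filter)
      then show "(\<Sum>Q'\<in>T. f i Q' * m Q') = c i * (\<Sum>Q'\<in>{Q'\<in>T. x Q' > 2^(i-1)}. m Q')"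
        unfolding f_def by (auto simp: sum_distrib_left intro!: sum.cong)
    qed
    finally show ?thesis .
  qed
  also have "\<dots> \<le> 2 * mQ + (\<Sum>i\<in>{1..N}. 4 * D * mQ * r^i)"
  proof (rule add_mono)
    show "(\<Sum>Q'\<in>T. m Q') \<le> 2 * mQ" unfolding m_def mQ_def
      using T iscube_props(2)[OF Qc] by (intro sparse_bound[OF E Ed T(1,2)]) auto
    show "(\<Sum>i\<in>{1..N}. c i * (\<Sum>Q'\<in>{Q'\<in>T. x Q' > 2^(i-1)}. m Q')) \<le> (\<Sum>i\<in>{1..N}. 4 * D * mQ * r^i)"
    proof (rule sum_mono)
      fix i assume i: "i \<in> {1..N}"
      have mu: "2^(i-1) * a > 0" using a by simp
      have eq: "{Q'\<in>T. x Q' > 2^(i-1)} = {Q'\<in>T. avg1 g Q' > 2^(i-1) * a}"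
        unfolding x_def using a by (auto simp: field_simps)
      have "(\<Sum>Q'\<in>{Q'\<in>T. x Q' > 2^(i-1)}. m Q') \<le> 2 * D / (2^(i-1) * a) * (a * mQ)"
        unfolding eq m_def D_def I[symmetric] by (rule level_bound[OF E Ed T gi mu])
      also have "\<dots> = 4 * D * mQ / 2^i"
      proof -
        have "(2::real)^i = 2 * 2^(i-1)" using i by (cases i) auto
        then show ?thesis using a by (simp add: field_simps)
      qed
      finally have "c i * (\<Sum>Q'\<in>{Q'\<in>T. x Q' > 2^(i-1)}. m Q') \<le> c i * (4 * D * mQ / 2^i)"
        unfolding c_def by (intro mult_left_mono) auto
      also have "\<dots> = 4 * D * mQ * (c i / 2^i)" by simp
      also have "\<dots> = 4 * D * mQ * r^i" unfolding c_def r_def by (simp add: c_over_pow)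
      finally show "c i * (\<Sum>Q'\<in>{Q'\<in>T. x Q' > 2^(i-1)}. m Q') \<le> 4 * D * mQ * r^i" .
    qed
  qed
  also have "\<dots> = 2 * mQ + 4 * D * mQ * (\<Sum>i\<in>{1..N}. r^i)" by (simp add: sum_distrib_left)
  also have "\<dots> \<le> 2 * mQ + 4 * D * mQ * (1 / (1 - r))"
    using geom_bound[OF r_bounds[OF s(2)], of N] mQ unfolding r_def D_def
    by (intro add_left_mono mult_left_mono) auto
  also have "\<dots> = (2 + 4 * D / (1 - r)) * mQ" by (simp add: algebra_simps)
  finally show ?thesis unfolding x_def m_def a_def mQ_def D_def r_def .
qed

lemma prod_powr_max:
  fixes y w :: "nat \<Rightarrow> real"
  assumes J: "finite J" "J \<noteq> {}" and y: "\<forall>j\<in>J. y j \<ge> 0" and w: "\<forall>j\<in>J. w j \<ge> 0"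
    and s: "(\<Sum>j\<in>J. w j) = s"
  shows "(\<Prod>j\<in>J. y j powr w j) \<le> (\<Sum>j\<in>J. y j powr s)"
proof -
  define M where "M = Max (y ` J)"
  have "M \<in> y ` J" unfolding M_def using J by (intro Max_in) auto
  then obtain j0 where j0: "j0 \<in> J" "y j0 = M" by auto
  have yM: "y j \<le> M" if "j \<in> J" for j unfolding M_def using J that by (intro Max_ge) auto
  have M0: "M \<ge> 0" using y j0 by auto
  have "(\<Prod>j\<in>J. y j powr w j) \<le> (\<Prod>j\<in>J. M powr w j)"
  proof (rule prod_mono)
    fix j assume "j \<in> J"
    then show "0 \<le> y j powr w j \<and> y j powr w j \<le> M powr w j"
      using y w yM by (simp add: powr_mono2)
  qed
  also have "\<dots> \<le> (\<Sum>j\<in>J. y j powr s)"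
  proof (cases "M = 0")
    case True
    then have "(\<Prod>j\<in>J. M powr w j) = 0" using J by (simp add: prod_zero_iff card_gt_0_iff)
    then show ?thesis by (simp add: sum_nonneg)
  next
    case False
    then have "(\<Prod>j\<in>J. M powr w j) = M powr s" using s powr_sum[of M w J] by simp
    also have "\<dots> = y j0 powr s" using j0 by simp
    also have "\<dots> \<le> (\<Sum>j\<in>J. y j powr s)" using J j0 by (intro member_le_sum) auto
    finally show ?thesis .
  qed
  finally show ?thesis .
qed

lemma pw_nonneg: "x \<ge> 0 \<Longrightarrow> pw x a \<ge> 0"
  by (simp add: pw_def)

lemma sub_integral_le:
  fixes g :: "real^'n \<Rightarrow> real"
  assumes "set_integrable lebesgue Q g" "Q' \<subseteq> Q" "Q' \<in> sets lebesgue"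
  shows "(\<integral>x\<in>Q'. \<bar>g x\<bar> \<partial>lebesgue) \<le> (\<integral>x\<in>Q. \<bar>g x\<bar> \<partial>lebesgue)"
proof -
  have "(\<Sum>P\<in>{Q'}. (\<integral>x\<in>P. \<bar>g x\<bar> \<partial>lebesgue)) \<le> (\<integral>x\<in>Q. \<bar>g x\<bar> \<partial>lebesgue)"
  proof (rule integral_disjoint_sum)
    show "set_integrable lebesgue Q (\<lambda>x. \<bar>g x\<bar>)" using set_integrable_abs[OF assms(1)] .
  qed (use assms in auto)
  then show ?thesis by simp
qed

lemma main_bound:
  fixes a :: "nat \<Rightarrow> real" and S T :: "(real^'n) set set" and g :: "nat \<Rightarrow> real^'n \<Rightarrow> real"
  assumes a: "\<forall>j<m. 0 \<le> a j \<and> a j < 1" and s1: "(\<Sum>j<m. a j) < 1"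
    and Sc: "\<forall>Q'\<in>S. iscube Q'" and sp: "sparse S"
    and gi: "\<forall>j<m. set_integrable lebesgue Q (g j)" and Qc: "iscube Q"
    and T: "finite T" "T \<subseteq> {Q'\<in>S. Q' \<subseteq> Q}"
  shows "(\<Sum>Q'\<in>T. (\<Prod>j<m. pw (avg1 (g j) Q') (a j)) * measure lebesgue Q')
     \<le> ((real m + 1) * (2 + 4 * 3^CARD('n) / (1 - 2 powr ((\<Sum>j<m. a j) - 1))))
        * ((\<Prod>j<m. pw (avg1 (g j) Q) (a j)) * measure lebesgue Q)"
proof -
  define s where "s = (\<Sum>j<m. a j)"
  define K where "K = 2 + 4 * 3^CARD('n) / (1 - 2 powr (s - 1))"
  define F where "F = (\<lambda>Q'. \<Prod>j<m. pw (avg1 (g j) Q') (a j))"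
  define J where "J = {j. j < m \<and> a j \<noteq> 0}"
  obtain E where EE: "(\<forall>Q\<in>S. E Q \<subseteq> Q \<and> E Q \<in> sets lebesgue \<and> measure lebesgue (E Q) \<ge> 1/2 * measure lebesgue Q)
    \<and> (\<forall>Q\<in>S. \<forall>Q'\<in>S. Q \<noteq> Q' \<longrightarrow> E Q \<inter> E Q' = {})"
    using sp unfolding sparse_def by (elim exE)
  note E = conjunct1[OF EE] and Ed = conjunct2[OF EE]
  have s0: "0 \<le> s" unfolding s_def using a by (intro sum_nonneg) auto
  have s1': "s < 1" using s1 s_def by simp
  have K2: "K \<ge> 2" using r_bounds[OF s1'] by (simp add: K_def)
  have mQ: "measure lebesgue Q > 0" using iscube_props(4)[OF Qc] .
  have T': "T \<subseteq> S" "\<forall>Q'\<in>T. iscube Q' \<and> Q' \<subseteq> Q" using T Sc by auto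
  have Tsum: "(\<Sum>Q'\<in>T. measure lebesgue Q') \<le> 2 * measure lebesgue Q"
    using T' iscube_props(2)[OF Qc] by (intro sparse_bound[OF E Ed T(1) T'(1)]) auto
  have FJ: "F Q' = (\<Prod>j\<in>J. avg1 (g j) Q' powr a j)" for Q'
  proof -
    have "F Q' = (\<Prod>j<m. if a j \<noteq> 0 then avg1 (g j) Q' powr a j else 1)"
      unfolding F_def pw_def by (intro prod.cong) auto
    also have "\<dots> = (\<Prod>j\<in>{j\<in>{..<m}. a j \<noteq> 0}. avg1 (g j) Q' powr a j)"
      by (rule prod.inter_filter[symmetric]) simp
    finally show ?thesis unfolding J_def by simp
  qed
  have F0: "F Q' \<ge> 0" for Q' unfolding F_def by (intro prod_nonneg pw_nonneg avg1_nonneg) 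
  have fJ: "finite J" unfolding J_def by simp
  have sJ: "(\<Sum>j\<in>J. a j) = s"
  proof -
    have "(\<Sum>j\<in>J. a j) = (\<Sum>j\<in>{j\<in>{..<m}. a j \<noteq> 0}. a j)" unfolding J_def by simp
    also have "\<dots> = (\<Sum>j<m. if a j \<noteq> 0 then a j else 0)" by (rule sum.inter_filter) simp
    also have "\<dots> = s" unfolding s_def by (intro sum.cong) auto
    finally show ?thesis .
  qed
  define C where "C = (real m + 1) * K"
  have "(\<Sum>Q'\<in>T. F Q' * measure lebesgue Q') \<le> C * (F Q * measure lebesgue Q)"
  proof (cases "J = {}")
    case True
    then have "F Q' = 1" for Q' using FJ by simp
    then have "(\<Sum>Q'\<in>T. F Q' * measure lebesgue Q') = (\<Sum>Q'\<in>T. measure lebesgue Q')" "F Q = 1" by auto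
    moreover have "2 * measure lebesgue Q \<le> C * measure lebesgue Q"
    proof -
      have "0 \<le> real m * K" using K2 by simp
      moreover have "C = real m * K + K" unfolding C_def by (simp add: distrib_right)
      ultimately have "2 \<le> C" using K2 by linarith
      then show ?thesis using mQ by (intro mult_right_mono) auto
    qed
    ultimately show ?thesis using Tsum by simp
  next
    case Jne: False
    show ?thesis
    proof (cases "\<exists>j\<in>J. avg1 (g j) Q = 0")
      case True
      then obtain j where j: "j \<in> J" "avg1 (g j) Q = 0" by blast
      have jm: "j < m" "a j > 0" using j(1) a unfolding J_def by auto
      have intQ: "(\<integral>x\<in>Q. \<bar>g j x\<bar> \<partial>lebesgue) = 0" using j(2) mQ unfolding avg1_def by simp
      have "F Q' = 0" if "Q' \<in> T \<or> Q' = Q" for Q'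
      proof -
        have "Q' \<subseteq> Q" "Q' \<in> sets lebesgue" using that T' iscube_props(1)[OF Qc] iscube_props(1) by auto
        then have "(\<integral>x\<in>Q'. \<bar>g j x\<bar> \<partial>lebesgue) \<le> 0"
          using sub_integral_le[of Q "g j" Q'] gi jm intQ by simp
        moreover have "(\<integral>x\<in>Q'. \<bar>g j x\<bar> \<partial>lebesgue) \<ge> 0"
          unfolding set_lebesgue_integral_def
          by (intro Bochner_Integration.integral_nonneg) (auto simp: indicator_def)
        ultimately have "avg1 (g j) Q' = 0" unfolding avg1_def by simp
        then show "F Q' = 0" unfolding FJ using j(1) fJ by (intro prod_zero) auto
      qed
      then show ?thesis by simp
    next
      case False
      define A where "A = (\<lambda>j. avg1 (g j) Q)"
      have Apos: "A j > 0" if "j \<in> J" for j using False that avg1_nonneg[of "g j" Q] unfolding A_def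
        by (metis less_eq_real_def)
      define x where "x = (\<lambda>j Q'. avg1 (g j) Q' / A j)"
      have x0: "x j Q' \<ge> 0" if "j \<in> J" for j Q' unfolding x_def using Apos[OF that] avg1_nonneg[of "g j" Q'] by simp
      have FQ: "F Q = (\<Prod>j\<in>J. A j powr a j)" unfolding FJ A_def ..
      have step: "F Q' \<le> F Q * (\<Sum>j\<in>J. x j Q' powr s)" for Q'
      proof -
        have "F Q' = (\<Prod>j\<in>J. (A j * x j Q') powr a j)"
          unfolding FJ x_def
        proof (intro prod.cong refl)
          fix j assume "j \<in> J"
          then have "A j \<noteq> 0" using Apos by force
          then show "avg1 (g j) Q' powr a j = (A j * (avg1 (g j) Q' / A j)) powr a j" by simp
        qed
        also have "\<dots> = (\<Prod>j\<in>J. A j powr a j * x j Q' powr a j)"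
          using Apos x0 by (intro prod.cong) (auto simp: powr_mult less_imp_le)
        also have "\<dots> = F Q * (\<Prod>j\<in>J. x j Q' powr a j)" unfolding FQ by (rule prod.distrib)
        also have "\<dots> \<le> F Q * (\<Sum>j\<in>J. x j Q' powr s)"
          using F0[of Q] x0 a sJ fJ Jne unfolding J_def
          by (intro mult_left_mono prod_powr_max) auto
        finally show ?thesis .
      qed
      have "(\<Sum>Q'\<in>T. F Q' * measure lebesgue Q') \<le> (\<Sum>Q'\<in>T. F Q * (\<Sum>j\<in>J. x j Q' powr s) * measure lebesgue Q')"
        using step by (intro sum_mono mult_right_mono) auto
      also have "\<dots> = F Q * (\<Sum>j\<in>J. \<Sum>Q'\<in>T. x j Q' powr s * measure lebesgue Q')"
      proof -
        have "(\<Sum>Q'\<in>T. F Q * (\<Sum>j\<in>J. x j Q' powr s) * measure lebesgue Q')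
            = F Q * (\<Sum>Q'\<in>T. \<Sum>j\<in>J. x j Q' powr s * measure lebesgue Q')"
          by (simp add: sum_distrib_left sum_distrib_right mult.assoc)
        also have "(\<Sum>Q'\<in>T. \<Sum>j\<in>J. x j Q' powr s * measure lebesgue Q')
            = (\<Sum>j\<in>J. \<Sum>Q'\<in>T. x j Q' powr s * measure lebesgue Q')"
          by (rule sum.swap)
        finally show ?thesis .
      qed
      also have "\<dots> \<le> F Q * (\<Sum>j\<in>J. K * measure lebesgue Q)"
      proof (intro mult_left_mono sum_mono F0)
        fix j assume j: "j \<in> J"
        then have jm: "j < m" unfolding J_def by simp
        show "(\<Sum>Q'\<in>T. x j Q' powr s * measure lebesgue Q') \<le> K * measure lebesgue Q"
          unfolding x_def A_def K_def
          using single_bound[OF E Ed T(1) T'(1) T'(2) Qc _ _ s0 s1', of "g j"] gi jm Apos[OF j]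
          unfolding A_def by simp
      qed
      also have "\<dots> = F Q * (real (card J) * K * measure lebesgue Q)" by simp
      also have "\<dots> \<le> F Q * ((real m + 1) * K * measure lebesgue Q)"
      proof -
        have "card J \<le> m" unfolding J_def using card_mono[of "{..<m}" "{j. j < m \<and> a j \<noteq> 0}"] by auto
        then have "real (card J) \<le> real m + 1" by simp
        then show ?thesis using F0[of Q] K2 mQ by (intro mult_left_mono mult_right_mono) auto
      qed
      finally show ?thesis unfolding C_def by (simp add: algebra_simps)
    qed
  qed
  then show ?thesis unfolding C_def K_def F_def s_def .
qed

lemma locint_cube: "locally_integrable g \<Longrightarrow> iscube Q \<Longrightarrow> set_integrable lebesgue Q g"
proof -
  assume g: "locally_integrable g" and Q: "iscube Q"
  have "compact (closure Q)" using iscube_props(5)[OF Q] by (simp add: compact_closure)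
  then have "set_integrable lebesgue (closure Q) g" using g unfolding locally_integrable_def by blast
  then show ?thesis using iscube_props(1)[OF Q] closure_subset by (rule set_integrable_subset)
qed

theorem lemma3p2:
  fixes m :: nat and a :: "nat \<Rightarrow> real"
  assumes "\<forall>j<m. 0 \<le> a j \<and> a j < 1"
    and "(\<Sum>j<m. a j) < 1"
  shows "\<exists>C>0. \<forall>(t :: real^'n) S (g :: nat \<Rightarrow> (real^'n \<Rightarrow> real)) Q.
           grid_shift t \<longrightarrow> S \<subseteq> dyadic_grid t \<longrightarrow> sparse S \<longrightarrow>
           (\<forall>j<m. locally_integrable (g j)) \<longrightarrow> Q \<in> dyadic_grid t \<longrightarrow>
           ((\<lambda>Q'. (\<Prod>j<m. pw (avg1 (g j) Q') (a j)) * measure lebesgue Q')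
               summable_on {Q'\<in>S. Q' \<subseteq> Q})
           \<and> (\<Sum>\<^sub>\<infinity>Q'\<in>{Q'\<in>S. Q' \<subseteq> Q}. (\<Prod>j<m. pw (avg1 (g j) Q') (a j)) * measure lebesgue Q')
               \<le> C * ((\<Prod>j<m. pw (avg1 (g j) Q) (a j)) * measure lebesgue Q)"
proof -
  define C where "C = (real m + 1) * (2 + 4 * 3^CARD('n) / (1 - 2 powr ((\<Sum>j<m. a j) - 1)))"
  have r: "2 powr ((\<Sum>j<m. a j) - 1) < 1" using r_bounds[OF assms(2)] by simp
  have "0 < 4 * 3^CARD('n) / (1 - 2 powr ((\<Sum>j<m. a j) - 1)) + (2::real)"
    using r by (intro add_nonneg_pos divide_nonneg_pos) auto
  then have Cpos: "C > 0" unfolding C_def by (intro mult_pos_pos) auto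
  show ?thesis
  proof (rule exI[of _ C], rule conjI[OF Cpos], intro allI impI)
    fix t :: "real^'n" and S :: "(real^'n) set set" and g :: "nat \<Rightarrow> real^'n \<Rightarrow> real" and Q :: "(real^'n) set"
    assume H: "grid_shift t" "S \<subseteq> dyadic_grid t" "sparse S" "\<forall>j<m. locally_integrable (g j)" "Q \<in> dyadic_grid t"
    define f where "f = (\<lambda>Q'. (\<Prod>j<m. pw (avg1 (g j) Q') (a j)) * measure lebesgue Q')"
    define B where "B = C * ((\<Prod>j<m. pw (avg1 (g j) Q) (a j)) * measure lebesgue Q)"
    have Qc: "iscube Q" using H(5) by (rule dyadic_iscube)
    have Sc: "\<forall>Q'\<in>S. iscube Q'" using H(2) dyadic_iscube by blast
    have gi: "\<forall>j<m. set_integrable lebesgue Q (g j)" using H(4) locint_cube Qc by blast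
    have bound: "sum f T \<le> B" if "finite T" "T \<subseteq> {Q'\<in>S. Q' \<subseteq> Q}" for T
      unfolding f_def B_def C_def using main_bound[OF assms Sc H(3) gi Qc that] .
    have f0: "f Q' \<ge> 0" for Q' unfolding f_def
      by (intro mult_nonneg_nonneg prod_nonneg pw_nonneg avg1_nonneg) auto
    have summ: "f summable_on {Q'\<in>S. Q' \<subseteq> Q}"
    proof (rule nonneg_bdd_above_summable_on)
      show "bdd_above (sum f ` {F. F \<subseteq> {Q'\<in>S. Q' \<subseteq> Q} \<and> finite F})"
        using bound by (intro bdd_aboveI[of _ B]) auto
    qed (use f0 in auto)
    have "infsum f {Q'\<in>S. Q' \<subseteq> Q} \<le> B"
      using summ bound by (rule infsum_le_finite_sums)
    then show "((\<lambda>Q'. (\<Prod>j<m. pw (avg1 (g j) Q') (a j)) * measure lebesgue Q')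
               summable_on {Q'\<in>S. Q' \<subseteq> Q})
           \<and> (\<Sum>\<^sub>\<infinity>Q'\<in>{Q'\<in>S. Q' \<subseteq> Q}. (\<Prod>j<m. pw (avg1 (g j) Q') (a j)) * measure lebesgue Q')
               \<le> C * ((\<Prod>j<m. pw (avg1 (g j) Q) (a j)) * measure lebesgue Q)"
      using summ unfolding f_def B_def by simp
  qed
qed
end
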